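(* Let $m\ge 0$ be an integer. Any two singly even self-dual $[24m+4,12m+2,4m+2]$ codes with minimal shadow have the same weight enumerator; that is, the weight enumerator of a singly even self-dual $[24m+4,12m+2,4m+2]$ code with minimal shadow is uniquely determined by $m$.
   Context: A binary code of length $n$ is a subspace of $\mathbb{F}_2^n$; $C^\perp$ is its dual with respect to the standard inner product, and $C$ is self-dual if $C=C^\perp$. A self-dual code is singly even if it contains a codeword of weight $\equiv 2 \pmod 4$. For a singly even self-dual code $C$, let $C_0$ be the subcode of codewords of weight $\equiv 0\pmod 4$; the shadow of $C$ is $S=C_0^\perp\setminus C$. For $n\equiv 4\pmod 8$, $C$ is said to have minimal shadow if the minimum weight of $S$ equals $2$. An $[n,k,d]$ code is a code of length $n$, dimension $k$ and minimum weight $d$. The weight enumerator of $C$ is $\sum_{x\in C} y^{\mathrm{wt}(x)}$. *)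

theory Defs
  imports Main
begin

text \<open>Binary words of length n are modelled as subsets of {..<n} (their supports).
  Addition in F_2^n is symmetric difference, weight is cardinality, and the standard
  inner product of x and y is the parity of card (x \<inter> y).\<close>

definition words :: "nat \<Rightarrow> nat set set" where
  "words n = Pow {..<n}"

definition vadd :: "nat set \<Rightarrow> nat set \<Rightarrow> nat set" where
  "vadd x y = (x - y) \<union> (y - x)"

definition wt :: "nat set \<Rightarrow> nat" where
  "wt x = card x"

definition orth :: "nat set \<Rightarrow> nat set \<Rightarrow> bool" where
  "orth x y \<longleftrightarrow> even (card (x \<inter> y))"

definition is_code :: "nat \<Rightarrow> nat set set \<Rightarrow> bool" where
  "is_code n C \<longleftrightarrow> C \<subseteq> words n \<and> {} \<in> C \<and> (\<forall>x\<in>C. \<forall>y\<in>C. vadd x y \<in> C)"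

definition dual :: "nat \<Rightarrow> nat set set \<Rightarrow> nat set set" where
  "dual n C = {y \<in> words n. \<forall>x\<in>C. orth x y}"

definition self_dual :: "nat \<Rightarrow> nat set set \<Rightarrow> bool" where
  "self_dual n C \<longleftrightarrow> is_code n C \<and> C = dual n C"

definition min_wt :: "nat set set \<Rightarrow> nat" where
  "min_wt C = Min (wt ` (C - {{}}))"

definition is_nkd_code :: "nat \<Rightarrow> nat \<Rightarrow> nat \<Rightarrow> nat set set \<Rightarrow> bool" where
  "is_nkd_code n k d C \<longleftrightarrow> is_code n C \<and> card C = 2 ^ k \<and> min_wt C = d"

definition singly_even :: "nat \<Rightarrow> nat set set \<Rightarrow> bool" where
  "singly_even n C \<longleftrightarrow> self_dual n C \<and> (\<exists>x\<in>C. wt x mod 4 = 2)"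

definition doubly_even_subcode :: "nat set set \<Rightarrow> nat set set" where
  "doubly_even_subcode C = {x \<in> C. wt x mod 4 = 0}"

definition shadow :: "nat \<Rightarrow> nat set set \<Rightarrow> nat set set" where
  "shadow n C = dual n (doubly_even_subcode C) - C"

text \<open>Minimal shadow (for n \<equiv> 4 mod 8): minimum weight of the shadow equals 2.\<close>
definition minimal_shadow :: "nat \<Rightarrow> nat set set \<Rightarrow> bool" where
  "minimal_shadow n C \<longleftrightarrow> Min (wt ` shadow n C) = 2"

text \<open>Weight enumerator, represented by its coefficient sequence:
  coefficient of y^i is the number of codewords of weight i.\<close>
definition weight_enum :: "nat set set \<Rightarrow> nat \<Rightarrow> nat" where
  "weight_enum C i = card {x \<in> C. wt x = i}"

end

theory Submission
  imports Defs Complex_Main "HOL-Computational_Algebra.Polynomial"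
begin


lemma poly_eq_cofinite:
  fixes p q :: "complex poly"
  assumes "\<And>t. t \<noteq> a \<Longrightarrow> poly p t = poly q t"
  shows "p = q"
proof (rule ccontr)
  assume "p \<noteq> q"
  then have "p - q \<noteq> 0" by simp
  then have "finite {x. poly (p - q) x = 0}" by (rule poly_roots_finite)
  moreover have "UNIV - {a} \<subseteq> {x. poly (p - q) x = 0}" using assms by auto
  ultimately have "finite (UNIV - {a} :: complex set)" by (rule rev_finite_subset)
  then have "finite (UNIV :: complex set)" by simp
  then show False using infinite_UNIV_char_0 by blast
qed

lemma poly_sum_upto:
  fixes R :: "'a::comm_ring_1 poly"
  assumes "degree R \<le> r"
  shows "poly R x = (\<Sum>i\<le>r. coeff R i * x ^ i)"
proof -
  have "poly R x = (\<Sum>i\<le>degree R. coeff R i * x ^ i)" by (rule poly_altdef)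
  also have "\<dots> = (\<Sum>i\<le>r. coeff R i * x ^ i)"
    by (rule sum.mono_neutral_left) (use assms in \<open>auto simp: coeff_eq_0\<close>)
  finally show ?thesis .
qed

lemma coeff_sum_monom_le:
  "coeff (\<Sum>i\<le>n. monom (a i) i) j = (if j \<le> n then a j else 0)"
  by (simp add: coeff_sum coeff_monom)

lemma mu_term:
  fixes t c :: complex
  assumes "t \<noteq> -1" "i \<le> N"
  shows "(1+t)^N * (c * (\<i>*(1-t)/(1+t)) ^ i) = c * ((\<i>*(1-t))^i * (1+t)^(N-i))"
proof -
  have t1: "1 + t \<noteq> 0" using assms(1) by (metis add.commute add_eq_0_iff)
  have "(1+t)^N = (1+t)^i * (1+t)^(N-i)" using assms(2) by (simp add: power_add[symmetric])
  moreover have "(1+t)^i * (\<i>*(1-t)/(1+t)) ^ i = (\<i>*(1-t))^i"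
    using t1 by (simp add: power_mult_distrib[symmetric])
  ultimately show ?thesis by (metis (no_types, lifting) mult.assoc mult.commute)
qed

lemma pure:
  fixes m :: nat and \<delta> \<sigma> :: "nat \<Rightarrow> complex"
  defines "n \<equiv> 24*m+4" and "K \<equiv> 4*m+2"
  assumes H0: "\<And>i. odd i \<Longrightarrow> \<delta> i = 0"
  and H1: "\<And>i. i < K \<or> n - K < i \<Longrightarrow> \<delta> i = 0"
  and H2s: "(\<Sum>i\<le>n. smult (\<delta> i) ([:1,-1:]^i * [:1,1:]^(n-i))) = smult (2^(n div 2)) (\<Sum>i\<le>n. smult (\<delta> i) ([:0,1:]^i))"
  and H3s: "(\<Sum>i\<le>n. smult (\<delta> i * (-1)^(i div 2)) ([:1,-1:]^i * [:1,1:]^(n-i))) = smult (2^(n div 2)) (\<Sum>j\<le>n. smult (\<sigma> j) ([:0,1:]^j))"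
  and H4: "\<And>j. j < 4*m \<or> n - 4*m < j \<Longrightarrow> \<sigma> j = 0"
  shows "\<delta> i = 0"
proof (rule ccontr)
  have H2: "(\<Sum>i\<le>n. [:\<delta> i:] * ([:1,-1:]^i * [:1,1:]^(n-i))) = smult (2^(n div 2)) (\<Sum>i\<le>n. monom (\<delta> i) i)"
    using H2s by (simp add: monom_altdef)
  have H3: "(\<Sum>i\<le>n. [:\<delta> i * (-1)^(i div 2):] * ([:1,-1:]^i * [:1,1:]^(n-i))) = smult (2^(n div 2)) (\<Sum>j\<le>n. monom (\<sigma> j) j)"
    using H3s by (simp add: monom_altdef)
  assume di: "\<delta> i \<noteq> 0"
  define \<Delta> where "\<Delta> = (\<Sum>i\<le>n. monom (\<delta> i) i)"
  have coeffD: "coeff \<Delta> j = (if j \<le> n then \<delta> j else 0)" for j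
    unfolding \<Delta>_def by (rule coeff_sum_monom_le)
  have "i \<le> n"
  proof (rule ccontr)
    assume "\<not> i \<le> n" then have "n - K < i" by simp
    then show False using H1[of i] di by blast
  qed
  then have D0: "\<Delta> \<noteq> 0" using coeffD[of i] di by auto
  have degD: "degree \<Delta> \<le> n - K" by (rule degree_le) (use coeffD H1 in auto)
  have d1: "monom 1 K dvd \<Delta>" unfolding monom_1_dvd_iff' using coeffD H1 by auto
  have d2': "[:1,-1:]^K dvd \<Delta>"
  proof -
    have "[:1,-1:]^K dvd (\<Sum>i\<le>n. [:\<delta> i:] * ([:1,-1:]^i * [:1,1:]^(n-i)))"
    proof (rule dvd_sum)
      fix j assume "j \<in> {..n}"
      show "[:1,-1:]^K dvd [:\<delta> j:] * ([:1,-1:]^j * [:1,1:]^(n-j))"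
      proof (cases "\<delta> j = 0")
        case False then have "\<not> (j < K \<or> n - K < j)" using H1 by blast
        then have "K \<le> j" by simp
        then have "[:1,-1:]^K dvd ([:1,-1:]^j :: complex poly)" by (rule le_imp_power_dvd)
        then show ?thesis by (intro dvd_mult dvd_mult2)
      qed simp
    qed
    then have "[:1,-1:]^K dvd smult (2^(n div 2)) \<Delta>" using H2 unfolding \<Delta>_def by simp
    then show ?thesis by (rule dvd_smult_cancel) simp
  qed
  have d3: "[:1,1:]^K dvd \<Delta>"
  proof -
    have "[:1,1:]^K dvd (\<Sum>i\<le>n. [:\<delta> i:] * ([:1,-1:]^i * [:1,1:]^(n-i)))"
    proof (rule dvd_sum)
      fix j assume "j \<in> {..n}"
      show "[:1,1:]^K dvd [:\<delta> j:] * ([:1,-1:]^j * [:1,1:]^(n-j))"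
      proof (cases "\<delta> j = 0")
        case False then have "\<not> (j < K \<or> n - K < j)" using H1 by blast
        then have "K \<le> n - j" using \<open>j \<in> {..n}\<close> unfolding K_def n_def by auto
        then have "[:1,1:]^K dvd ([:1,1:]^(n-j) :: complex poly)" by (rule le_imp_power_dvd)
        then show ?thesis by (intro dvd_mult)
      qed simp
    qed
    then have "[:1,1:]^K dvd smult (2^(n div 2)) \<Delta>" using H2 unfolding \<Delta>_def by simp
    then show ?thesis by (rule dvd_smult_cancel) simp
  qed
  have "[:1,-1:]^K = smult ((-1)^K) ([:-1,1:]^K :: complex poly)"
  proof -
    have "[:1,-1:] = smult (-1) ([:-1,1:] :: complex poly)" by simp
    then have "[:1,-1:]^K = (smult (-1) ([:-1,1:] :: complex poly))^K" by simp
    then show ?thesis by (simp only: smult_power)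
  qed
  then have d2: "[:-1,1:]^K dvd \<Delta>" using d2' by (simp add: smult_dvd_iff)
  obtain Q1 where Q1: "\<Delta> = monom 1 K * Q1" using d1 by (rule dvdE)
  have "K \<le> order 1 \<Delta>" using d2 D0 order_divides[of 1 K \<Delta>] by simp
  also have "order 1 \<Delta> = order 1 Q1"
    using D0 unfolding Q1 by (subst order_mult) (auto intro!: order_0I simp: poly_monom)
  finally have "[:-1,1:]^K dvd Q1" using order_divides[of 1 K Q1] by simp
  then obtain Q2 where Q2: "Q1 = [:-1,1:]^K * Q2" by (rule dvdE)
  have "K \<le> order (-1) \<Delta>" using d3 D0 order_divides[of "-1" K \<Delta>] by simp
  also have "order (-1) \<Delta> = order (-1) Q2"
    using D0 unfolding Q1 Q2 by (simp add: order_mult order_0I poly_monom order_power_n_n)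
  finally have "[:1,1:]^K dvd Q2" using order_divides[of "-1" K Q2] by simp
  then obtain R where R: "Q2 = [:1,1:]^K * R" by (rule dvdE)
  have DR: "\<Delta> = monom 1 K * [:-1,1:]^K * [:1,1:]^K * R" using Q1 Q2 R by (simp add: mult.assoc)
  have R0: "R \<noteq> 0" using D0 DR by auto
  have "degree \<Delta> = K + K + K + degree R"
    unfolding DR using R0 by (simp add: degree_mult_eq degree_power_eq degree_monom_eq)
  with degD have degR: "degree R + 4*K \<le> n" by simp
  define r where "r = n - 4*K"
  have nr: "n = r + 4*K" using degR unfolding r_def by simp
  have degR': "degree R \<le> r" using degR unfolding r_def by simp
  define \<mu> where "\<mu> t = \<i> * (1 - t) / (1 + t)" for t :: complex
  define X where "X = (\<Sum>i\<le>r. [:coeff R i:] * ([:\<i>, -\<i>:]^i * [:1,1:]^(r-i)))"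
  have pm: "poly [:\<i>, -\<i>:] t = \<i>*(1-t)" for t by (simp add: algebra_simps)
  have polyX: "poly X t = (1+t)^r * poly R (\<mu> t)" if t: "t \<noteq> -1" for t
  proof -
    have "poly X t = (\<Sum>i\<le>r. coeff R i * ((\<i>*(1-t))^i * (1+t)^(r-i)))"
      unfolding X_def poly_sum by (rule sum.cong[OF refl]) (simp add: algebra_simps)
    also have "\<dots> = (\<Sum>i\<le>r. (1+t)^r * (coeff R i * \<mu> t ^ i))"
      by (rule sum.cong[OF refl]) (simp add: \<mu>_def mu_term[OF t])
    also have "\<dots> = (1+t)^r * poly R (\<mu> t)"
      by (simp add: poly_sum_upto[OF degR'] sum_distrib_left)
    finally show ?thesis .
  qed
  define L3 where "L3 = (\<Sum>i\<le>n. [:\<delta> i * (-1)^(i div 2):] * ([:1,-1:]^i * [:1,1:]^(n-i)))"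
  have polyL3: "poly L3 t = (1+t)^n * poly \<Delta> (\<mu> t)" if t: "t \<noteq> -1" for t
  proof -
    have "poly L3 t = (\<Sum>i\<le>n. \<delta> i * (-1)^(i div 2) * ((1-t)^i * (1+t)^(n-i)))"
      unfolding L3_def by (simp add: poly_sum add.commute)
    also have "\<dots> = (\<Sum>i\<le>n. (1+t)^n * (\<delta> i * \<mu> t ^ i))"
    proof (rule sum.cong[OF refl])
      fix i assume i: "i \<in> {..n}"
      show "\<delta> i * (-1)^(i div 2) * ((1-t)^i * (1+t)^(n-i)) = (1+t)^n * (\<delta> i * \<mu> t ^ i)"
      proof (cases "\<delta> i = 0")
        case False
        then have "even i" using H0 by blast
        then obtain k where k: "i = 2*k" by blast
        have "(\<i>*(1-t))^i = (-1)^(i div 2) * (1-t)^i"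
        proof -
          have sq: "(\<i>*(1-t))^2 = -((1-t)^2)" by (simp add: power_mult_distrib)
          have "(\<i>*(1-t))^i = ((\<i>*(1-t))^2)^k" unfolding k by (simp add: power_mult)
          also have "\<dots> = (-1)^k * ((1-t)^2)^k" unfolding sq by (rule power_minus)
          also have "\<dots> = (-1)^(i div 2) * (1-t)^i" unfolding k by (simp add: power_mult)
          finally show ?thesis .
        qed
        then show ?thesis using i by (simp add: \<mu>_def mu_term[OF t])
      qed simp
    qed
    also have "\<dots> = (1+t)^n * poly \<Delta> (\<mu> t)"
      by (simp add: \<Delta>_def poly_sum poly_monom sum_distrib_left)
    finally show ?thesis .
  qed
  define P where "P = (\<Sum>j\<le>n. monom (\<sigma> j) j)"
  define Z :: "complex poly" where "Z = [:1,0,0,0,-1:]"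
  have keyid: "(1+t)^4 * (\<mu> t * (\<mu> t - 1) * (\<mu> t + 1)) = -2*\<i>*(1-t^4)" if t: "t \<noteq> -1" for t
  proof -
    have t1: "1 + t \<noteq> 0" using t by (metis add.commute add_eq_0_iff)
    have a: "(1+t) * \<mu> t = \<i>*(1-t)" using t1 by (simp add: \<mu>_def)
    have b: "(1+t) * (\<mu> t - 1) = \<i>*(1-t) - (1+t)" using a by (simp add: algebra_simps)
    have c: "(1+t) * (\<mu> t + 1) = \<i>*(1-t) + (1+t)" using a by (simp add: algebra_simps)
    have d: "(\<i>*(1-t) - (1+t)) * (\<i>*(1-t) + (1+t)) = -2*(1+t^2)"
    proof -
      have "(\<i>*(1-t) - (1+t)) * (\<i>*(1-t) + (1+t)) = (\<i>*\<i>)*(1-t)^2 - (1+t)^2"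
        by (simp add: algebra_simps power2_eq_square)
      also have "\<dots> = -2*(1+t^2)" by (simp add: algebra_simps power2_eq_square)
      finally show ?thesis .
    qed
    have "(1+t)^4 * (\<mu> t * (\<mu> t - 1) * (\<mu> t + 1)) = (1+t) * ((1+t) * \<mu> t) * ((1+t) * (\<mu> t - 1) * ((1+t) * (\<mu> t + 1)))"
      by (simp add: power4_eq_xxxx algebra_simps)
    also have "\<dots> = (1+t) * (\<i>*(1-t)) * (-2*(1+t^2))" unfolding a b c d ..
    also have "\<dots> = -2*\<i>*(1-t^4)" by (simp add: algebra_simps power2_eq_square power4_eq_xxxx)
    finally show ?thesis .
  qed
  have pD: "poly \<Delta> z = z^K*(z-1)^K*(z+1)^K*poly R z" for z
    unfolding DR by (simp add: poly_monom algebra_simps)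
  have pZ: "poly Z t = 1 - t^4" for t by (simp add: Z_def algebra_simps power4_eq_xxxx)
  have key: "poly (smult (2^(n div 2)) P) t = poly (smult ((-2*\<i>)^K) (Z^K * X)) t" if t: "t \<noteq> -1" for t
  proof -
    have "poly (smult (2^(n div 2)) P) t = poly L3 t" using H3 unfolding L3_def P_def by simp
    also have "\<dots> = (1+t)^n * poly \<Delta> (\<mu> t)" by (rule polyL3[OF t])
    also have "\<dots> = (1+t)^(4*K) * (\<mu> t ^ K * (\<mu> t - 1)^K * (\<mu> t + 1)^K) * ((1+t)^r * poly R (\<mu> t))"
      unfolding pD nr power_add by (simp add: mult_ac)
    also have "\<dots> = ((1+t)^4 * (\<mu> t * (\<mu> t - 1) * (\<mu> t + 1)))^K * poly X t"
      by (simp add: polyX[OF t] power_mult power_mult_distrib)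
    also have "\<dots> = poly (smult ((-2*\<i>)^K) (Z^K * X)) t"
      by (simp add: keyid[OF t] pZ flip: power_mult_distrib)
    finally show ?thesis .
  qed
  have eqP: "smult (2^(n div 2)) P = smult ((-2*\<i>)^K) (Z^K * X)"
    by (rule poly_eq_cofinite[of "-1"]) (rule key)
  have Z0: "Z \<noteq> 0" by (simp add: Z_def)
  have degZ: "degree Z = 4" by (simp add: Z_def)
  have c0: "(-2*\<i>)^K \<noteq> 0" by simp
  show False
  proof (cases "X = 0")
    case False
    have coeffP: "coeff P j = (if j \<le> n then \<sigma> j else 0)" for j
      unfolding P_def by (rule coeff_sum_monom_le)
    have degP: "degree P \<le> n - 4*m" by (rule degree_le) (use coeffP H4 in auto)
    have "4*K + degree X = degree (smult ((-2*\<i>)^K) (Z^K * X))"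
      using Z0 False by (simp add: degree_mult_eq degree_power_eq degZ)
    also have "\<dots> = degree (smult (2^(n div 2)) P)" using eqP by simp
    also have "\<dots> = degree P" by simp
    finally have deg1: "4*K + degree X \<le> n - 4*m" using degP by simp
    have "monom 1 (4*m) dvd P" unfolding monom_1_dvd_iff' using coeffP H4 by auto
    then have "monom 1 (4*m) dvd smult (2^(n div 2)) P" by (simp add: dvd_smult)
    then have dv: "monom 1 (4*m) dvd smult ((-2*\<i>)^K) (Z^K) * X" using eqP by simp
    have nz: "smult ((-2*\<i>)^K) (Z^K) * X \<noteq> 0" using Z0 False by simp
    have o1: "order 0 (smult ((-2*\<i>)^K) (Z^K)) = 0" by (rule order_0I) (simp add: pZ)
    have "4*m \<le> order 0 (smult ((-2*\<i>)^K) (Z^K) * X)"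
      using dv nz monom_1_dvd_iff by blast
    also have "\<dots> = order 0 X" using order_mult[OF nz, of 0] o1 by simp
    also have "\<dots> \<le> degree X" using False by (rule order_degree)
    finally show False using deg1 unfolding K_def n_def by simp
  next
    case True
    have r0: "poly R (\<mu> t) = 0" if t: "t \<noteq> -1" for t
    proof -
      have t1: "1 + t \<noteq> 0" using t by (metis add.commute add_eq_0_iff)
      have "(1+t)^r * poly R (\<mu> t) = 0" using polyX[OF t] True by simp
      then show ?thesis using t1 by simp
    qed
    have inj: "inj_on \<mu> {t. t \<noteq> -1}"
    proof (rule inj_onI)
      fix s t assume s: "s \<in> {t. t \<noteq> -1}" and t: "t \<in> {t. t \<noteq> -1}" and e: "\<mu> s = \<mu> t"
      have s1: "1 + s \<noteq> 0" using s by (metis add.commute add_eq_0_iff mem_Collect_eq)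
      have t1: "1 + t \<noteq> 0" using t by (metis add.commute add_eq_0_iff mem_Collect_eq)
      from e have "\<i>*(1-s)*(1+t) = \<i>*(1-t)*(1+s)" using s1 t1
        by (simp add: \<mu>_def field_simps)
      then have "(1-s)*(1+t) = (1-t)*(1+s)" by (simp add: mult.assoc)
      then show "s = t" by (simp add: algebra_simps)
    qed
    have inf: "infinite {t::complex. t \<noteq> -1}"
    proof
      assume "finite {t::complex. t \<noteq> -1}"
      then have "finite (insert (-1) {t::complex. t \<noteq> -1})" by simp
      moreover have "insert (-1) {t::complex. t \<noteq> -1} = UNIV" by auto
      ultimately have "finite (UNIV :: complex set)" by metis
      then show False using infinite_UNIV_char_0 by blast
    qed
    have "infinite (\<mu> ` {t. t \<noteq> -1})" using inf inj finite_imageD by blast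
    moreover have "\<mu> ` {t. t \<noteq> -1} \<subseteq> {x. poly R x = 0}" using r0 by auto
    ultimately have "infinite {x. poly R x = 0}" using finite_subset by blast
    then show False using poly_roots_finite R0 by blast
  qed
qed


lemma finite_words: "finite (words n)" by (simp add: words_def)

lemma card_vadd:
  assumes "finite x" "finite y"
  shows "card (vadd x y) + 2 * card (x \<inter> y) = card x + card y"
proof -
  have "card (vadd x y) = card (x - y) + card (y - x)"
    unfolding vadd_def using assms by (intro card_Un_disjoint) auto
  moreover have "card x = card (x \<inter> y) + card (x - y)" using assms(1) by (rule card_Int_Diff)
  moreover have "card y = card (y \<inter> x) + card (y - x)" using assms(2) by (rule card_Int_Diff)
  moreover have "y \<inter> x = x \<inter> y" by auto
  ultimately show ?thesis by simp
qed

lemma vadd_vadd: "vadd (vadd x y) y = x" unfolding vadd_def by auto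
lemma vadd_comm: "vadd x y = vadd y x" unfolding vadd_def by auto
lemma vadd_empty_iff: "vadd x y = {} \<longleftrightarrow> x = y" unfolding vadd_def by auto

lemma orth_sym: "orth x y = orth y x" unfolding orth_def by (simp add: Int_commute)

lemma orth_vadd:
  assumes "finite z"
  shows "orth z (vadd x y) \<longleftrightarrow> (orth z x \<longleftrightarrow> orth z y)"
proof -
  have e: "z \<inter> vadd x y = vadd (z \<inter> x) (z \<inter> y)" unfolding vadd_def by auto
  have "card (vadd (z \<inter> x) (z \<inter> y)) + 2 * card ((z \<inter> x) \<inter> (z \<inter> y)) = card (z \<inter> x) + card (z \<inter> y)"
    using assms by (intro card_vadd) auto
  then show ?thesis unfolding orth_def e
    by presburger
qed

lemma char_sum:
  fixes y :: "'a::comm_ring_1"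
  assumes "u \<subseteq> {..<n}"
  shows "(\<Sum>v\<in>Pow {..<n}. (-1)^card (u \<inter> v) * y^card v) = (1-y)^card u * (1+y)^(n - card u)"
proof -
  define f where "f x = (if x \<in> u then -y else y)" for x
  have fu: "finite u" using assms finite_subset by blast
  have pv: "(\<Prod>x\<in>X. f x) = (-1)^card (u \<inter> X) * y^card X" if "X \<subseteq> {..<n}" for X
  proof -
    have fX: "finite X" using that finite_subset by blast
    have "(\<Prod>x\<in>X. f x) = (\<Prod>x\<in>X \<inter> {x. x \<in> u}. -y) * (\<Prod>x\<in>X \<inter> - {x. x \<in> u}. y)"
      unfolding f_def by (rule prod.If_cases[OF fX])
    also have "\<dots> = (-y)^card (X \<inter> u) * y^card (X - u)"
      by (simp add: Diff_eq Int_def)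
    also have "\<dots> = (-1)^card (u \<inter> X) * y^(card (X \<inter> u) + card (X - u))"
    proof -
      have "(-y)^card (X \<inter> u) = (-1)^card (X \<inter> u) * y^card (X \<inter> u)" by (rule power_minus)
      then show ?thesis by (simp add: power_add Int_commute mult.assoc)
    qed
    also have "card (X \<inter> u) + card (X - u) = card X" using card_Int_Diff[OF fX, of u] by simp
    finally show ?thesis .
  qed
  have "(\<Prod>x\<in>{..<n}. f x + 1) = (\<Sum>X\<in>Pow {..<n}. (\<Prod>x\<in>X. f x) * (\<Prod>x\<in>{..<n}-X. 1))"
    by (rule prod_add) simp
  also have "\<dots> = (\<Sum>v\<in>Pow {..<n}. (-1)^card (u \<inter> v) * y^card v)"
    by (rule sum.cong[OF refl]) (simp add: pv)
  finally have 1: "(\<Sum>v\<in>Pow {..<n}. (-1)^card (u \<inter> v) * y^card v) = (\<Prod>x\<in>{..<n}. f x + 1)" ..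
  have "(\<Prod>x\<in>{..<n}. f x + 1) = (\<Prod>x\<in>{..<n} \<inter> {x. x \<in> u}. 1 - y) * (\<Prod>x\<in>{..<n} \<inter> - {x. x \<in> u}. 1 + y)"
  proof -
    have "(\<lambda>x. f x + 1) = (\<lambda>x. if x \<in> u then 1 - y else 1 + y)" by (auto simp: f_def fun_eq_iff)
    then show ?thesis by (simp only:) (rule prod.If_cases, simp)
  qed
  also have "\<dots> = (1-y)^card u * (1+y)^card ({..<n} - u)"
  proof -
    have "{..<n} \<inter> {x. x \<in> u} = u" using assms by auto
    moreover have "{..<n} \<inter> - {x. x \<in> u} = {..<n} - u" by auto
    ultimately show ?thesis by simp
  qed
  also have "card ({..<n} - u) = n - card u" using assms fu by (simp add: card_Diff_subset)
  finally show ?thesis using 1 by simp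
qed


lemma code_finite: "is_code n E \<Longrightarrow> finite E"
  unfolding is_code_def words_def by (auto intro: finite_subset)

lemma words_finite_elem: "v \<in> words n \<Longrightarrow> finite v"
  unfolding words_def by (auto intro: finite_subset)

lemma char_orth:
  assumes E: "is_code n E" and v: "v \<in> words n"
  shows "(\<Sum>u\<in>E. (-1::int)^card (u \<inter> v)) = (if v \<in> dual n E then int (card E) else 0)"
proof (cases "v \<in> dual n E")
  case True
  then have "\<forall>u\<in>E. orth u v" by (simp add: dual_def)
  then have "(\<Sum>u\<in>E. (-1::int)^card (u \<inter> v)) = (\<Sum>u\<in>E. 1)"
    by (intro sum.cong) (auto simp: orth_def)
  then show ?thesis using True by simp
next
  case False
  then obtain u0 where u0: "u0 \<in> E" "\<not> orth u0 v" using v by (auto simp: dual_def)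
  have fv: "finite v" using v by (rule words_finite_elem)
  have neg: "(-1::int)^card (vadd u u0 \<inter> v) = - ((-1)^card (u \<inter> v))" for u
  proof -
    have "orth v (vadd u u0) \<longleftrightarrow> (orth v u \<longleftrightarrow> orth v u0)" using fv by (rule orth_vadd)
    then have "even (card (vadd u u0 \<inter> v)) \<longleftrightarrow> \<not> even (card (u \<inter> v))"
      using u0(2) by (auto simp: orth_def Int_commute)
    then show ?thesis by (auto simp: minus_one_power_iff)
  qed
  have "(\<Sum>u\<in>E. (-1::int)^card (u \<inter> v)) = (\<Sum>u\<in>E. (-1::int)^card (vadd u u0 \<inter> v))"
    by (rule sum.reindex_bij_witness[of _ "\<lambda>u. vadd u u0" "\<lambda>u. vadd u u0"])
      (use E u0 in \<open>auto simp: is_code_def vadd_vadd\<close>)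
  also have "\<dots> = - (\<Sum>u\<in>E. (-1::int)^card (u \<inter> v))" by (simp add: neg sum_negf)
  finally show ?thesis using False by simp
qed

lemma macwilliams:
  fixes y :: "'a::comm_ring_1"
  assumes E: "is_code n E"
  shows "(\<Sum>u\<in>E. (1-y)^wt u * (1+y)^(n - wt u)) = of_nat (card E) * (\<Sum>v\<in>dual n E. y^wt v)"
proof -
  have EW: "E \<subseteq> Pow {..<n}" using E by (simp add: is_code_def words_def)
  have "(\<Sum>u\<in>E. (1-y)^wt u * (1+y)^(n - wt u)) = (\<Sum>u\<in>E. \<Sum>v\<in>Pow {..<n}. (-1)^card (u \<inter> v) * y^card v)"
    by (rule sum.cong[OF refl]) (use EW in \<open>auto simp: wt_def char_sum\<close>)
  also have "\<dots> = (\<Sum>v\<in>Pow {..<n}. \<Sum>u\<in>E. (-1)^card (u \<inter> v) * y^card v)" by (rule sum.swap)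
  also have "\<dots> = (\<Sum>v\<in>Pow {..<n}. of_int (\<Sum>u\<in>E. (-1::int)^card (u \<inter> v)) * y^card v)"
    by (simp add: sum_distrib_right of_int_sum)
  also have "\<dots> = (\<Sum>v\<in>Pow {..<n}. (if v \<in> dual n E then of_nat (card E) * y^card v else 0))"
    by (rule sum.cong[OF refl]) (simp add: char_orth[OF E] words_def)
  also have "\<dots> = (\<Sum>v\<in>{v \<in> Pow {..<n}. v \<in> dual n E}. of_nat (card E) * y^card v)"
    by (rule sum.inter_filter[symmetric]) simp
  also have "{v \<in> Pow {..<n}. v \<in> dual n E} = dual n E" by (auto simp: dual_def words_def)
  finally show ?thesis by (simp add: wt_def sum_distrib_left)
qed


lemma mod4_vadd:
  assumes "finite x" "finite y" "even (card (x \<inter> y))"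
  shows "card (vadd x y) mod 4 = (card x + card y) mod 4"
proof -
  have "card (vadd x y) + 2 * card (x \<inter> y) = card x + card y" using assms(1,2) by (rule card_vadd)
  then show ?thesis using assms(3) by presburger
qed

locale sdc =
  fixes m :: nat and C :: "nat set set"
  assumes se: "singly_even (24*m+4) C"
  and nkd: "is_nkd_code (24*m+4) (12*m+2) (4*m+2) C"
  and ms: "minimal_shadow (24*m+4) C"
begin

abbreviation "n \<equiv> 24*m+4"
abbreviation "K \<equiv> 4*m+2"
abbreviation "U \<equiv> {..<n}"
abbreviation "C0 \<equiv> doubly_even_subcode C"
abbreviation "S \<equiv> shadow n C"

lemma code: "is_code n C" using nkd by (simp add: is_nkd_code_def)
lemma Cdual: "C = dual n C" using se by (simp add: singly_even_def self_dual_def)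
lemma finC: "finite C" using code by (rule code_finite)
lemma CW: "x \<in> C \<Longrightarrow> x \<in> words n" using code by (auto simp: is_code_def)
lemma CU: "x \<in> C \<Longrightarrow> x \<subseteq> U" using CW by (auto simp: words_def)
lemma finx: "x \<in> C \<Longrightarrow> finite x" using CW words_finite_elem by blast
lemma wt_le: "x \<in> C \<Longrightarrow> wt x \<le> n" unfolding wt_def using CU by (metis card_lessThan card_mono finite_lessThan)
lemma Cadd: "x \<in> C \<Longrightarrow> y \<in> C \<Longrightarrow> vadd x y \<in> C" using code by (simp add: is_code_def)
lemma Cempty: "{} \<in> C" using code by (simp add: is_code_def)
lemma orthC: "x \<in> C \<Longrightarrow> y \<in> C \<Longrightarrow> orth x y"
  using Cdual by (metis (no_types, lifting) dual_def mem_Collect_eq)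
lemma evenC: "x \<in> C \<Longrightarrow> even (card x)" using orthC[of x x] by (simp add: orth_def)
lemma cardC: "card C = 2^(12*m+2)" using nkd by (simp add: is_nkd_code_def)
lemma UC: "U \<in> C"
proof -
  have "U \<in> dual n C" unfolding dual_def words_def
    using CU evenC by (auto simp: orth_def Int_absorb2)
  then show ?thesis using Cdual by simp
qed
lemma minwt: "x \<in> C \<Longrightarrow> x \<noteq> {} \<Longrightarrow> K \<le> wt x"
proof -
  assume "x \<in> C" "x \<noteq> {}"
  then have "wt x \<in> wt ` (C - {{}})" by auto
  moreover have "finite (wt ` (C - {{}}))" using finC by simp
  ultimately have "Min (wt ` (C - {{}})) \<le> wt x" by (rule Min_le[rotated])
  then show ?thesis using nkd by (simp add: is_nkd_code_def min_wt_def)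
qed
lemma vaddU: "x \<subseteq> U \<Longrightarrow> vadd x U = U - x" unfolding vadd_def by auto
lemma wt_range: "x \<in> C \<Longrightarrow> x = {} \<or> x = U \<or> (K \<le> wt x \<and> wt x \<le> n - K)"
proof -
  assume x: "x \<in> C"
  show ?thesis
  proof (cases "x = {} \<or> x = U")
    case False
    then have 1: "K \<le> wt x" using minwt x by blast
    have "U - x \<in> C" using Cadd[OF x UC] vaddU[OF CU[OF x]] by simp
    moreover have "U - x \<noteq> {}" using False CU[OF x] by auto
    ultimately have "K \<le> wt (U - x)" using minwt by blast
    moreover have "wt (U - x) = n - wt x" unfolding wt_def using CU[OF x] finx[OF x]
      by (simp add: card_Diff_subset)
    ultimately have "wt x \<le> n - K" by arith
    then show ?thesis using 1 by simp
  qed auto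
qed
lemma we_out: "i < K \<or> n - K < i \<Longrightarrow> {x\<in>C. wt x = i} = {x\<in>{{},U}. wt x = i}"
proof -
  assume i: "i < K \<or> n - K < i"
  show ?thesis
  proof (rule set_eqI, rule iffI)
    fix x assume "x \<in> {x\<in>C. wt x = i}"
    then have x: "x \<in> C" "wt x = i" by auto
    have "\<not> (K \<le> wt x \<and> wt x \<le> n - K)" using i x(2) by linarith
    then have "x = {} \<or> x = U" using wt_range[OF x(1)] by blast
    then show "x \<in> {x\<in>{{},U}. wt x = i}" using x(2) by auto
  next
    fix x assume "x \<in> {x\<in>{{},U}. wt x = i}"
    then show "x \<in> {x\<in>C. wt x = i}" using Cempty UC by auto
  qed
qed
lemma we_odd: "odd i \<Longrightarrow> {x\<in>C. wt x = i} = {}" using evenC by (auto simp: wt_def)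


lemma C0_def': "C0 = {x\<in>C. wt x mod 4 = 0}" by (simp add: doubly_even_subcode_def)
lemma C0C: "C0 \<subseteq> C" by (auto simp: doubly_even_subcode_def)
lemma wt_add_mod4: "x \<in> C \<Longrightarrow> y \<in> C \<Longrightarrow> wt (vadd x y) mod 4 = (wt x + wt y) mod 4"
  unfolding wt_def using finx orthC by (intro mod4_vadd) (auto simp: orth_def)
lemma C0code: "is_code n C0"
  unfolding is_code_def
proof (intro conjI ballI)
  show "C0 \<subseteq> words n" using C0C CW by blast
  show "{} \<in> C0" using Cempty by (simp add: doubly_even_subcode_def wt_def)
  fix x y assume "x \<in> C0" "y \<in> C0"
  then show "vadd x y \<in> C0" using wt_add_mod4 Cadd by (auto simp: doubly_even_subcode_def)
qed


lemma C2_char: "x \<in> C - C0 \<longleftrightarrow> x \<in> C \<and> wt x mod 4 = 2"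
proof -
  have "x \<in> C \<Longrightarrow> even (wt x)" using evenC by (simp add: wt_def)
  then show ?thesis by (auto simp: doubly_even_subcode_def) presburger+
qed
lemma cardC0: "card C = 2 * card C0"
proof -
  obtain x0 where x0: "x0 \<in> C" "wt x0 mod 4 = 2" using se by (auto simp: singly_even_def)
  have "bij_betw (\<lambda>x. vadd x x0) C0 (C - C0)"
  proof (rule bij_betw_byWitness[where f' = "\<lambda>x. vadd x x0"])
    show "\<forall>a\<in>C0. vadd (vadd a x0) x0 = a" by (simp add: vadd_vadd)
    show "\<forall>a\<in>C - C0. vadd (vadd a x0) x0 = a" by (simp add: vadd_vadd)
    show "(\<lambda>x. vadd x x0) ` C0 \<subseteq> C - C0"
    proof
      fix y assume "y \<in> (\<lambda>x. vadd x x0) ` C0"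
      then obtain x where x: "x \<in> C0" "y = vadd x x0" by auto
      then have "x \<in> C" "wt x mod 4 = 0" by (auto simp: doubly_even_subcode_def)
      then show "y \<in> C - C0" unfolding C2_char x(2) using x0 Cadd wt_add_mod4 by auto presburger?
    qed
    show "(\<lambda>x. vadd x x0) ` (C - C0) \<subseteq> C0"
    proof
      fix y assume "y \<in> (\<lambda>x. vadd x x0) ` (C - C0)"
      then obtain x where x: "x \<in> C - C0" "y = vadd x x0" by auto
      then have "x \<in> C" "wt x mod 4 = 2" using C2_char by auto
      then show "y \<in> C0" unfolding C0_def' x(2) using x0 Cadd wt_add_mod4 by auto presburger?
    qed
  qed
  then have "card C0 = card (C - C0)" by (rule bij_betw_same_card)
  moreover have "card C = card C0 + card (C - C0)"
    using finC C0C by (metis card_Diff_subset card_mono diff_add_inverse infinite_super le_add_diff_inverse)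
  ultimately show ?thesis by simp
qed


lemma C_sub_dualC0: "C \<subseteq> dual n C0"
  unfolding dual_def using CW orthC C0C by auto
lemma dualC0: "dual n C0 = C \<union> S" using C_sub_dualC0 by (auto simp: shadow_def)
lemma SW: "s \<in> S \<Longrightarrow> s \<in> words n" by (auto simp: shadow_def dual_def)
lemma finS: "finite S"
  by (rule finite_subset[OF _ finite_words[of n]]) (use SW in blast)
lemma CS_disj: "C \<inter> S = {}" by (auto simp: shadow_def)

lemma shadow_identity:
  fixes y :: "'a::comm_ring_1"
  shows "(\<Sum>u\<in>C. (-1)^(wt u div 2) * ((1-y)^wt u * (1+y)^(n - wt u))) = of_nat (card C) * (\<Sum>s\<in>S. y^wt s)"
proof -
  define T where "T u = (1-y)^wt u * (1+y)^(n - wt u)" for u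
  have fC0: "finite C0" using finC C0C finite_subset by blast
  have m0: "(\<Sum>u\<in>C0. T u) = of_nat (card C0) * ((\<Sum>v\<in>C. y^wt v) + (\<Sum>s\<in>S. y^wt s))"
    unfolding T_def macwilliams[OF C0code] dualC0 using finC finS CS_disj by (simp add: sum.union_disjoint)
  have m1: "(\<Sum>u\<in>C. T u) = of_nat (card C) * (\<Sum>v\<in>C. y^wt v)"
    unfolding T_def using macwilliams[OF code, of y] Cdual[symmetric] by simp
  have split: "(\<Sum>u\<in>C. f u) = (\<Sum>u\<in>C0. f u) + (\<Sum>u\<in>C - C0. f u)" for f :: "nat set \<Rightarrow> 'a"
    using finC C0C by (metis sum.subset_diff add.commute)
  have "(\<Sum>u\<in>C. (-1)^(wt u div 2) * T u) = (\<Sum>u\<in>C0. T u) - (\<Sum>u\<in>C - C0. T u)"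
  proof -
    have a: "(\<Sum>u\<in>C0. (-1)^(wt u div 2) * T u) = (\<Sum>u\<in>C0. T u)"
    proof (rule sum.cong[OF refl])
      fix u assume "u \<in> C0"
      then have "wt u mod 4 = 0" by (simp add: doubly_even_subcode_def)
      then have "even (wt u div 2)" by presburger
      then show "(-1)^(wt u div 2) * T u = T u" by simp
    qed
    have b: "(\<Sum>u\<in>C - C0. (-1)^(wt u div 2) * T u) = - (\<Sum>u\<in>C - C0. T u)"
      unfolding sum_negf[symmetric]
    proof (rule sum.cong[OF refl])
      fix u assume "u \<in> C - C0"
      then have "wt u mod 4 = 2" using C2_char by blast
      then have "odd (wt u div 2)" by presburger
      then show "(-1)^(wt u div 2) * T u = - T u" by simp
    qed
    show ?thesis unfolding split a b by simp
  qed
  also have "\<dots> = 2 * (\<Sum>u\<in>C0. T u) - (\<Sum>u\<in>C. T u)" unfolding split by (simp add: algebra_simps)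
  also have "\<dots> = of_nat (card C) * (\<Sum>s\<in>S. y^wt s)"
    unfolding m0 m1 cardC0 by (simp add: algebra_simps)
  finally show ?thesis unfolding T_def .
qed

lemma S_nonempty: "S \<noteq> {}"
proof
  assume S0: "S = {}"
  have "(\<Sum>u\<in>C. (-1)^(wt u div 2) * ((1-1)^wt u * (1+1)^(n - wt u))) = (\<Sum>u\<in>C. if u = {} then (2::int)^n else 0)"
  proof (rule sum.cong[OF refl])
    fix u assume u: "u \<in> C"
    show "(-1)^(wt u div 2) * ((1-1)^wt u * (1+1)^(n - wt u)) = (if u = {} then (2::int)^n else 0)"
      using finx[OF u] by (auto simp: wt_def)
  qed
  also have "\<dots> = 2^n" using Cempty finC by simp
  finally have "(2::int)^n = of_nat (card C) * (\<Sum>s\<in>S. 1^wt s)" using shadow_identity[of "1::int"] by simp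
  then show False using S0 by simp
qed

lemma s0_ex: "\<exists>s0\<in>S. wt s0 = 2"
proof -
  have "Min (wt ` S) \<in> wt ` S" using finS S_nonempty by simp
  then show ?thesis using ms by (auto simp: minimal_shadow_def)
qed


lemma S_orth_C0: "s \<in> S \<Longrightarrow> x \<in> C0 \<Longrightarrow> orth x s" by (auto simp: shadow_def dual_def)

lemma S_notorth_C2:
  assumes s: "s \<in> S" and x: "x \<in> C - C0"
  shows "\<not> orth x s"
proof -
  have "s \<notin> dual n C" using s Cdual by (auto simp: shadow_def)
  then obtain x1 where x1: "x1 \<in> C" "\<not> orth x1 s" using SW[OF s] by (auto simp: dual_def)
  then have "x1 \<in> C - C0" using S_orth_C0[OF s] by blast
  then have x1': "wt x1 mod 4 = 2" using C2_char by blast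
  have x': "x \<in> C" "wt x mod 4 = 2" using x C2_char by auto
  have "(wt x + wt x1) mod 4 = 0" using x1' x'(2) by presburger
  then have "vadd x x1 \<in> C0" unfolding C0_def' using Cadd[OF x'(1) x1(1)] wt_add_mod4[OF x'(1) x1(1)]
    by auto
  then have "orth (vadd x x1) s" using S_orth_C0[OF s] by blast
  then have "orth s (vadd x x1)" by (simp add: orth_sym)
  then have "orth s x \<longleftrightarrow> orth s x1" using orth_vadd[OF words_finite_elem[OF SW[OF s]]] by blast
  then show ?thesis using x1(2) by (simp add: orth_sym)
qed

lemma SS: "s \<in> S \<Longrightarrow> s' \<in> S \<Longrightarrow> vadd s s' \<in> C"
proof -
  assume s: "s \<in> S" and s': "s' \<in> S"
  have "vadd s s' \<in> dual n C" unfolding dual_def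
  proof (intro CollectI conjI ballI)
    show "vadd s s' \<in> words n" using SW[OF s] SW[OF s'] by (auto simp: words_def vadd_def)
    fix x assume x: "x \<in> C"
    have "orth x (vadd s s') \<longleftrightarrow> (orth x s \<longleftrightarrow> orth x s')" using finx[OF x] by (rule orth_vadd)
    then show "orth x (vadd s s')"
      using S_orth_C0[OF s] S_orth_C0[OF s'] S_notorth_C2[OF s] S_notorth_C2[OF s'] x by blast
  qed
  then show ?thesis using Cdual by simp
qed

lemma UC0: "U \<in> C0" unfolding C0_def' using UC by (simp add: wt_def)

lemma S_compl: "s \<in> S \<Longrightarrow> vadd s U \<in> S"
proof -
  assume s: "s \<in> S"
  have "vadd s U \<in> dual n C0" unfolding dual_def
  proof (intro CollectI conjI ballI)
    show "vadd s U \<in> words n" using SW[OF s] by (auto simp: words_def vadd_def)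
    fix x assume x: "x \<in> C0"
    have "orth x (vadd s U) \<longleftrightarrow> (orth x s \<longleftrightarrow> orth x U)" using finx C0C x by (intro orth_vadd) blast
    moreover have "orth x U" using orthC C0C x UC by blast
    ultimately show "orth x (vadd s U)" using S_orth_C0[OF s x] by blast
  qed
  moreover have "vadd s U \<notin> C"
  proof
    assume "vadd s U \<in> C"
    then have "vadd (vadd s U) U \<in> C" using Cadd UC by blast
    then show False using s by (simp add: vadd_vadd shadow_def)
  qed
  ultimately show ?thesis by (simp add: shadow_def)
qed

lemma wt_S_le: "s \<in> S \<Longrightarrow> wt s \<le> n"
  using SW unfolding wt_def words_def by (metis PowD card_lessThan card_mono finite_lessThan)

lemma S_low: assumes s: "s \<in> S" and s0: "s0 \<in> S" "wt s0 = 2" and w: "wt s < 4*m" shows "s = s0"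
proof (rule ccontr)
  assume ne: "s \<noteq> s0"
  have "vadd s s0 \<in> C" using SS s s0 by blast
  moreover have "vadd s s0 \<noteq> {}" using ne by (simp add: vadd_empty_iff)
  ultimately have "K \<le> wt (vadd s s0)" by (rule minwt)
  moreover have "card (vadd s s0) + 2 * card (s \<inter> s0) = card s + card s0"
    using words_finite_elem[OF SW[OF s]] words_finite_elem[OF SW[OF s0(1)]] by (rule card_vadd)
  ultimately show False using w s0(2) unfolding wt_def by linarith
qed

lemma S_count:
  assumes j: "j < 4*m \<or> n - 4*m < j"
  shows "card {s\<in>S. wt s = j} = (if j = 2 \<or> j = n - 2 then 1 else 0)"
proof -
  obtain s0 where s0: "s0 \<in> S" "wt s0 = 2" using s0_ex by blast
  have wU: "wt (vadd s U) = n - wt s" if "s \<in> S" for s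
  proof -
    have "s \<subseteq> U" using SW[OF that] by (simp add: words_def)
    moreover have "finite s" using words_finite_elem[OF SW[OF that]] .
    ultimately have "card (U - s) = card U - card s" by (rule card_Diff_subset[rotated])
    then show ?thesis unfolding vaddU[OF \<open>s \<subseteq> U\<close>] wt_def by simp
  qed
  show ?thesis
  proof (cases "m = 0")
    case True
    then have "j > n" using j by simp
    then have "\<forall>s\<in>S. wt s \<noteq> j"
    proof (intro ballI)
      fix s assume "j > n" "s \<in> S"
      then show "wt s \<noteq> j" using wt_S_le[of s] by linarith
    qed
    then have E: "{s\<in>S. wt s = j} = {}" by blast
    have "card {s\<in>S. wt s = j} = 0" unfolding E by simp
    then show ?thesis using True \<open>j > n\<close> by simp
  next
    case False
    show ?thesis
    proof (cases "j < 4*m")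
      case True
      have E: "{s\<in>S. wt s = j} = (if j = 2 then {s0} else {})"
      proof (rule set_eqI, rule iffI)
        fix s assume "s \<in> {s\<in>S. wt s = j}"
        then have s: "s \<in> S" "wt s = j" by auto
        then have "s = s0" using S_low[OF s(1) s0(1) s0(2)] True by simp
        then show "s \<in> (if j = 2 then {s0} else {})" using s s0 by simp
      next
        fix s assume "s \<in> (if j = 2 then {s0} else {})"
        then show "s \<in> {s\<in>S. wt s = j}" using s0 by (simp split: if_splits)
      qed
      have "card {s\<in>S. wt s = j} = (if j = 2 then 1 else 0)" unfolding E by simp
      moreover have "j \<noteq> n - 2" using True by simp
      ultimately show ?thesis by simp
    next
      case jb: False
      then have jb: "n - 4*m < j" using j by simp
      have E: "{s\<in>S. wt s = j} = (if j = n - 2 then {vadd s0 U} else {})"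
      proof (rule set_eqI, rule iffI)
        fix s assume "s \<in> {s\<in>S. wt s = j}"
        then have s: "s \<in> S" "wt s = j" by auto
        have "wt s \<le> n" using wt_S_le[OF s(1)] .
        then have "wt (vadd s U) < 4*m" using wU[OF s(1)] s(2) jb by linarith
        then have "vadd s U = s0" using S_low[OF S_compl[OF s(1)] s0] by blast
        then have "s = vadd s0 U" by (metis vadd_vadd)
        moreover have "j = n - 2"
        proof -
          have "wt s0 = n - wt s" using wU[OF s(1)] \<open>vadd s U = s0\<close> by simp
          then show ?thesis using s0(2) s(2) \<open>wt s \<le> n\<close> by linarith
        qed
        ultimately show "s \<in> (if j = n - 2 then {vadd s0 U} else {})" by simp
      next
        fix s assume "s \<in> (if j = n - 2 then {vadd s0 U} else {})"
        then have "j = n - 2" "s = vadd s0 U" by (simp_all split: if_splits)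
        then show "s \<in> {s\<in>S. wt s = j}" using S_compl[OF s0(1)] wU[OF s0(1)] s0(2) by simp
      qed
      have "card {s\<in>S. wt s = j} = (if j = n - 2 then 1 else 0)" unfolding E by simp
      moreover have "j \<noteq> 2" using jb by simp
      ultimately show ?thesis by simp
    qed
  qed
qed

end



lemma sum_by_wt:
  fixes f :: "nat \<Rightarrow> 'a::comm_semiring_1"
  assumes "finite A" "\<And>a. a \<in> A \<Longrightarrow> wt a \<le> n"
  shows "(\<Sum>a\<in>A. f (wt a)) = (\<Sum>i\<le>n. of_nat (card {a\<in>A. wt a = i}) * f i)"
proof -
  have "(\<Sum>a\<in>A. f (wt a)) = (\<Sum>i\<in>{..n}. \<Sum>a\<in>{x\<in>A. wt x = i}. f (wt a))"
    by (rule sum.group[symmetric]) (use assms in auto)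
  also have "\<dots> = (\<Sum>i\<le>n. of_nat (card {a\<in>A. wt a = i}) * f i)"
    by (rule sum.cong[OF refl]) simp
  finally show ?thesis .
qed

lemma smult_sum_right: "smult c (sum f A) = (\<Sum>i\<in>A. smult c (f i))"
  by (induct A rule: infinite_finite_induct) (simp_all add: smult_add_right)

lemma ofnat_mult_poly: "(of_nat k :: 'a::comm_semiring_1 poly) * p = smult (of_nat k) p"
  by (simp add: of_nat_poly)

lemma (in sdc) H2_C:
  "(\<Sum>i\<le>n. smult (of_nat (weight_enum C i)) ([:1,-1:]^i * [:1,1:]^(n-i))) =
   smult (2^(n div 2)) (\<Sum>i\<le>n. smult (of_nat (weight_enum C i)) ([:0,1::complex:]^i))"
proof -
  have "(\<Sum>u\<in>C. (1-[:0,1::complex:])^wt u * (1+[:0,1:])^(n - wt u)) = of_nat (card C) * (\<Sum>v\<in>C. [:0,1:]^wt v)"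
    using macwilliams[OF code, of "[:0,1::complex:]"] Cdual[symmetric] by simp
  moreover have "(\<Sum>u\<in>C. (1-[:0,1::complex:])^wt u * (1+[:0,1:])^(n - wt u)) =
     (\<Sum>i\<le>n. of_nat (weight_enum C i) * ((1-[:0,1::complex:])^i * (1+[:0,1:])^(n - i)))"
    unfolding weight_enum_def by (rule sum_by_wt[OF finC wt_le])
  moreover have "(\<Sum>v\<in>C. [:0,1::complex:]^wt v) = (\<Sum>i\<le>n. of_nat (weight_enum C i) * [:0,1:]^i)"
    unfolding weight_enum_def by (rule sum_by_wt[OF finC wt_le])
  ultimately have "(\<Sum>i\<le>n. of_nat (weight_enum C i) * ((1-[:0,1::complex:])^i * (1+[:0,1:])^(n - i))) =
     of_nat (card C) * (\<Sum>i\<le>n. of_nat (weight_enum C i) * [:0,1:]^i)" by simp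
  note E = this
  have Y1: "1 - [:0,1::complex:] = [:1,-1:]" by (rule poly_eqI) (simp add: coeff_1 coeff_pCons split: nat.split)
  have Y2: "1 + [:0,1::complex:] = [:1,1:]" by (rule poly_eqI) (simp add: coeff_1 coeff_pCons split: nat.split)
  have c: "(of_nat (card C) :: complex) = 2^(n div 2)" unfolding cardC by simp
  have "(\<Sum>i\<le>n. smult (of_nat (weight_enum C i)) ([:1,-1:]^i * [:1,1:]^(n-i))) =
    (\<Sum>i\<le>n. of_nat (weight_enum C i) * ((1-[:0,1::complex:])^i * (1+[:0,1:])^(n - i)))"
    unfolding Y1 Y2 ofnat_mult_poly ..
  also have "\<dots> = of_nat (card C) * (\<Sum>i\<le>n. of_nat (weight_enum C i) * [:0,1:]^i)" by (rule E)
  also have "\<dots> = smult (of_nat (card C)) (\<Sum>i\<le>n. smult (of_nat (weight_enum C i)) ([:0,1::complex:]^i))"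
    unfolding ofnat_mult_poly ..
  finally show ?thesis unfolding c .
qed


lemma neg1_pow_poly: "(-1 :: 'a::comm_ring_1 poly)^k = [:(-1)^k:]"
  by (induct k) (simp_all add: one_pCons)

lemma (in sdc) H3_C:
  "(\<Sum>i\<le>n. smult (of_nat (weight_enum C i) * (-1)^(i div 2)) ([:1,-1:]^i * [:1,1:]^(n-i))) =
   smult (2^(n div 2)) (\<Sum>j\<le>n. smult (of_nat (card {s\<in>S. wt s = j})) ([:0,1::complex:]^j))"
proof -
  have Y1: "1 - [:0,1::complex:] = [:1,-1:]" by (rule poly_eqI) (simp add: coeff_1 coeff_pCons split: nat.split)
  have Y2: "1 + [:0,1::complex:] = [:1,1:]" by (rule poly_eqI) (simp add: coeff_1 coeff_pCons split: nat.split)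
  have c: "(of_nat (card C) :: complex) = 2^(n div 2)" unfolding cardC by simp
  have E0: "(\<Sum>u\<in>C. (-1)^(wt u div 2) * ((1-[:0,1::complex:])^wt u * (1+[:0,1:])^(n - wt u))) =
     of_nat (card C) * (\<Sum>s\<in>S. [:0,1:]^wt s)" by (rule shadow_identity)
  have E1: "(\<Sum>u\<in>C. (-1)^(wt u div 2) * ((1-[:0,1::complex:])^wt u * (1+[:0,1:])^(n - wt u))) =
    (\<Sum>i\<le>n. of_nat (weight_enum C i) * ((-1)^(i div 2) * ((1-[:0,1::complex:])^i * (1+[:0,1:])^(n - i))))"
    unfolding weight_enum_def by (rule sum_by_wt[OF finC wt_le])
  have E2: "(\<Sum>s\<in>S. [:0,1::complex:]^wt s) = (\<Sum>j\<le>n. of_nat (card {s\<in>S. wt s = j}) * [:0,1:]^j)"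
    by (rule sum_by_wt[OF finS wt_S_le])
  have "(\<Sum>i\<le>n. smult (of_nat (weight_enum C i) * (-1)^(i div 2)) ([:1,-1:]^i * [:1,1:]^(n-i))) =
    (\<Sum>i\<le>n. of_nat (weight_enum C i) * ((-1)^(i div 2) * ((1-[:0,1::complex:])^i * (1+[:0,1:])^(n - i))))"
    unfolding Y1 Y2 ofnat_mult_poly neg1_pow_poly by (simp add: smult_smult)
  also have "\<dots> = of_nat (card C) * (\<Sum>j\<le>n. of_nat (card {s\<in>S. wt s = j}) * [:0,1:]^j)"
    using E0 E1 E2 by simp
  also have "\<dots> = smult (of_nat (card C)) (\<Sum>j\<le>n. smult (of_nat (card {s\<in>S. wt s = j})) ([:0,1::complex:]^j))"
    unfolding ofnat_mult_poly ..
  finally show ?thesis unfolding c .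
qed

theorem mainTheorem2:
  fixes m :: nat and C D :: "nat set set"
  defines "n \<equiv> 24 * m + 4"
  assumes "singly_even n C" and "is_nkd_code n (12 * m + 2) (4 * m + 2) C"
    and "minimal_shadow n C"
    and "singly_even n D" and "is_nkd_code n (12 * m + 2) (4 * m + 2) D"
    and "minimal_shadow n D"
  shows "weight_enum C = weight_enum D"
proof -
  interpret c: sdc m C using assms(2-4) unfolding n_def by unfold_locales
  interpret d: sdc m D using assms(5-7) unfolding n_def by unfold_locales
  define \<delta> where "\<delta> i = (of_nat (weight_enum C i) - of_nat (weight_enum D i) :: complex)" for i
  define \<sigma> where "\<sigma> j = (of_nat (card {s\<in>shadow (24*m+4) C. wt s = j}) - of_nat (card {s\<in>shadow (24*m+4) D. wt s = j}) :: complex)" for j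
  have pc: "smult (a - b) p = smult a p - smult b p" for a b :: complex and p by (rule smult_diff_left)
  have H0: "\<delta> i = 0" if "odd i" for i
    unfolding \<delta>_def weight_enum_def c.we_odd[OF that] d.we_odd[OF that] by simp
  have H1: "\<delta> i = 0" if "i < 4*m+2 \<or> (24*m+4) - (4*m+2) < i" for i
    unfolding \<delta>_def weight_enum_def using c.we_out[OF that] d.we_out[OF that] by simp
  have H2: "(\<Sum>i\<le>24*m+4. smult (\<delta> i) ([:1,-1:]^i * [:1,1:]^(24*m+4-i))) =
      smult (2^((24*m+4) div 2)) (\<Sum>i\<le>24*m+4. smult (\<delta> i) ([:0,1:]^i))"
    unfolding \<delta>_def smult_diff_left sum_subtractf c.H2_C d.H2_C smult_diff_right ..
  have H3: "(\<Sum>i\<le>24*m+4. smult (\<delta> i * (-1)^(i div 2)) ([:1,-1:]^i * [:1,1:]^(24*m+4-i))) =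
      smult (2^((24*m+4) div 2)) (\<Sum>j\<le>24*m+4. smult (\<sigma> j) ([:0,1:]^j))"
    unfolding \<delta>_def \<sigma>_def left_diff_distrib smult_diff_left sum_subtractf c.H3_C d.H3_C smult_diff_right ..
  have H4: "\<sigma> j = 0" if "j < 4*m \<or> (24*m+4) - 4*m < j" for j
    unfolding \<sigma>_def using c.S_count[OF that] d.S_count[OF that] by simp
  have "\<delta> i = 0" for i by (rule pure[OF H0 H1 H2 H3 H4])
  then show ?thesis unfolding \<delta>_def by (auto simp: fun_eq_iff)
qed


end
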